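(* For any $k \ge 1$, the number of Grassmannian permutations of all sizes $m \ge 0$ (the empty permutation of size $0$ included) that avoid $\operatorname{id}_k = 12\cdots k$ is \[ \sum_{m=0}^{2k-2} |\mathcal{G}_m(\operatorname{id}_k)| = C_{k+1} - \binom{k}{2} - 1, \] and there are none of size $m \ge 2k-1$. Here $C_n=\frac{1}{n+1}\binom{2n}{n}$.
   Context: A permutation is Grassmannian if it has at most one descent (one-line notation). $\mathcal{G}_m(\operatorname{id}_k)$ denotes the set of Grassmannian permutations of $[m]$ that avoid (do not contain as an order-isomorphic subsequence) the identity permutation $12\cdots k$. *)

theory Defs
  imports Main "HOL-Library.Sublist"
begin

definition perms_of :: "nat \<Rightarrow> nat list set" where
  "perms_of m = {xs. distinct xs \<and> set xs = {1..m}}"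

text \<open>Descent positions (0-based index i with w(i) > w(i+1)).\<close>
definition descents :: "nat list \<Rightarrow> nat set" where
  "descents xs = {i. Suc i < length xs \<and> xs ! i > xs ! Suc i}"

definition grassmannian :: "nat list \<Rightarrow> bool" where
  "grassmannian xs \<longleftrightarrow> card (descents xs) \<le> 1"

text \<open>xs contains the pattern id_k = 12...k iff it has an increasing subsequence of length k.\<close>
definition contains_id :: "nat \<Rightarrow> nat list \<Rightarrow> bool" where
  "contains_id k xs \<longleftrightarrow> (\<exists>ys. subseq ys xs \<and> length ys = k \<and> sorted_wrt (<) ys)"

definition G :: "nat \<Rightarrow> nat \<Rightarrow> nat list set" where
  "G m k = {xs \<in> perms_of m. grassmannian xs \<and> \<not> contains_id k xs}"

definition catalan :: "nat \<Rightarrow> nat" where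
  "catalan n = ((2 * n) choose n) div (n + 1)"

end

theory Submission
  imports Defs
begin


fun pa :: "nat \<Rightarrow> bool list \<Rightarrow> nat list" where
  "pa n [] = []"
| "pa n (b#w) = (if b then n # pa (Suc n) w else pa (Suc n) w)"

fun pb :: "nat \<Rightarrow> bool list \<Rightarrow> nat list" where
  "pb n [] = []"
| "pb n (b#w) = (if b then pb (Suc n) w else n # pb (Suc n) w)"

definition mk :: "nat \<Rightarrow> bool list \<Rightarrow> nat list" where
  "mk n w = pa n w @ pb n w"

fun nF :: "bool list \<Rightarrow> nat" where
  "nF [] = 0" | "nF (b#w) = (if b then nF w else Suc (nF w))"
fun nT :: "bool list \<Rightarrow> nat" where
  "nT [] = 0" | "nT (b#w) = (if b then Suc (nT w) else nT w)"
fun q :: "bool list \<Rightarrow> nat" where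
  "q [] = 0" | "q (b#w) = (if b then Suc (q w) else max (Suc (nF w)) (q w))"

lemma in_pa: "v \<in> set (pa n w) \<longleftrightarrow> n \<le> v \<and> v < n + length w \<and> w!(v-n)"
proof (induction w arbitrary: n)
  case Nil then show ?case by simp
next
  case (Cons b w)
  show ?case
  proof (cases "v \<le> n")
    case True
    then show ?thesis using Cons[of "Suc n"] by (cases "v = n") auto
  next
    case False
    then obtain j where j: "v = Suc n + j" by (metis add_Suc less_imp_Suc_add not_le)
    show ?thesis using Cons[of "Suc n"] by (simp add: j)
  qed
qed

lemma in_pb: "v \<in> set (pb n w) \<longleftrightarrow> n \<le> v \<and> v < n + length w \<and> \<not> w!(v-n)"
proof (induction w arbitrary: n)
  case Nil then show ?case by simp
next
  case (Cons b w)
  show ?case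
  proof (cases "v \<le> n")
    case True
    then show ?thesis using Cons[of "Suc n"] by (cases "v = n") auto
  next
    case False
    then obtain j where j: "v = Suc n + j" by (metis add_Suc less_imp_Suc_add not_le)
    show ?thesis using Cons[of "Suc n"] by (simp add: j)
  qed
qed

lemma set_pa: "set (pa n w) = {v. n \<le> v \<and> v < n + length w \<and> w!(v-n)}"
  using in_pa by blast
lemma set_pb: "set (pb n w) = {v. n \<le> v \<and> v < n + length w \<and> \<not> w!(v-n)}"
  using in_pb by blast

lemma sorted_pa: "sorted_wrt (<) (pa n w)"
proof (induction w arbitrary: n)
  case (Cons b w) then show ?case by (auto simp: set_pa)
qed simp

lemma sorted_pb: "sorted_wrt (<) (pb n w)"
proof (induction w arbitrary: n)
  case (Cons b w) then show ?case by (auto simp: set_pb)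
qed simp

lemma length_pb: "length (pb n w) = nF w"
  by (induction w arbitrary: n) auto

lemma len_nTF: "length w = nT w + nF w"
  by (induction w) auto
lemma nT_le_q: "nT w \<le> q w" by (induction w) auto
lemma nF_le_q: "nF w \<le> q w" by (induction w) auto
lemma nF_le_len: "nF w \<le> length w" by (induction w) auto
lemma q_le_len: "q w \<le> length w" by (induction w) (auto simp: nF_le_len le_SucI)
lemma len_le_q: "length w \<le> 2 * q w" using len_nTF[of w] nT_le_q[of w] nF_le_q[of w] by simp

lemma mk_perm: "distinct (mk n w) \<and> set (mk n w) = {n..<n + length w}"
proof -
  have "distinct (pa n w)" "distinct (pb n w)"
    using sorted_pa sorted_pb strict_sorted_iff by blast+
  moreover have "set (pa n w) \<inter> set (pb n w) = {}" by (auto simp: set_pa set_pb)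
  moreover have "set (pa n w) \<union> set (pb n w) = {n..<n + length w}" by (auto simp: set_pa set_pb)
  ultimately show ?thesis by (simp add: mk_def)
qed

lemma desc_app:
  assumes "sorted_wrt (<) as" "sorted_wrt (<) bs" "d \<in> descents (as @ bs)"
  shows "Suc d = length as"
proof -
  from assms(3) have d: "Suc d < length as + length bs" "(as@bs)!d > (as@bs)!Suc d"
    by (auto simp: descents_def)
  consider "Suc d < length as" | "length as \<le> d" | "Suc d = length as" by linarith
  then show ?thesis
  proof cases
    case 1
    then have "as!d < as!Suc d" using assms(1) by (simp add: sorted_wrt_iff_nth_less)
    with d 1 show ?thesis by (simp add: nth_append)
  next
    case 2
    then have "bs!(d - length as) < bs!(Suc d - length as)" using assms(2) d(1)
      by (simp add: sorted_wrt_iff_nth_less)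
    with d 2 show ?thesis by (simp add: nth_append Suc_diff_le)
  qed
qed

lemma grass_app:
  assumes "sorted_wrt (<) as" "sorted_wrt (<) bs"
  shows "grassmannian (as @ bs)"
proof -
  have "descents (as@bs) \<subseteq> {length as - 1}" using desc_app[OF assms] by force
  then have "card (descents (as@bs)) \<le> card {length as - 1}" by (intro card_mono) auto
  then show ?thesis by (simp add: grassmannian_def)
qed



lemma contains_0[simp]: "contains_id 0 xs"
  unfolding contains_id_def by (rule exI[of _ "[]"]) auto

lemma contains_Nil: "contains_id k [] \<longleftrightarrow> k = 0"
  unfolding contains_id_def by auto

lemma subseq_set: "subseq xs ys \<Longrightarrow> set xs \<subseteq> set ys"
  by (induction rule: list_emb.induct) auto

lemma subseq_skip: "subseq (x#xs) (A @ ys) \<Longrightarrow> x \<notin> set A \<Longrightarrow> subseq (x#xs) ys"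
  by (induction A) (auto split: if_splits)

lemma contains_Cons:
  assumes "\<forall>x\<in>set L. n < x"
  shows "contains_id (Suc k) (n # L) \<longleftrightarrow> contains_id k L"
proof
  assume "contains_id (Suc k) (n # L)"
  then obtain ys where ys: "subseq ys (n#L)" "length ys = Suc k" "sorted_wrt (<) ys"
    unfolding contains_id_def by blast
  then obtain y ys' where yy: "ys = y # ys'" by (cases ys) auto
  have "subseq ys' L"
  proof (cases "y = n")
    case True then show ?thesis using ys(1) yy by simp
  next
    case False then have "subseq (y#ys') L" using ys(1) yy by simp
    then show ?thesis by (rule subseq_Cons')
  qed
  then show "contains_id k L" unfolding contains_id_def using ys yy by auto
next
  assume "contains_id k L"
  then obtain ys where ys: "subseq ys L" "length ys = k" "sorted_wrt (<) ys"
    unfolding contains_id_def by blast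
  have "set ys \<subseteq> set L" using ys(1) by (rule subseq_set)
  then have "\<forall>x\<in>set ys. n < x" using assms by blast
  then have s1: "sorted_wrt (<) (n # ys)" using ys(3) by simp
  have s2: "subseq (n # ys) (n # L)" using ys(1) by simp
  have s3: "length (n # ys) = Suc k" using ys(2) by simp
  show "contains_id (Suc k) (n # L)" unfolding contains_id_def
    using s1 s2 s3 by blast
qed

lemma contains_mid:
  assumes "\<forall>x\<in>set A. n < x" "\<forall>x\<in>set B. n < x" "sorted_wrt (<) B"
  shows "contains_id k (A @ n # B) \<longleftrightarrow> contains_id k (A @ B) \<or> k \<le> Suc (length B)"
proof
  assume "contains_id k (A @ n # B)"
  then obtain ys where ys: "subseq ys (A @ n # B)" "length ys = k" "sorted_wrt (<) ys"
    unfolding contains_id_def by blast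
  show "contains_id k (A @ B) \<or> k \<le> Suc (length B)"
  proof (cases "n \<in> set ys")
    case False
    have "subseq (filter (\<lambda>x. x \<noteq> n) ys) (filter (\<lambda>x. x \<noteq> n) (A @ n # B))"
      using ys(1) by (rule subseq_filter)
    moreover have "filter (\<lambda>x. x \<noteq> n) ys = ys" using False by (induction ys) auto
    moreover have "filter (\<lambda>x. x \<noteq> n) A = A" using assms(1) by (auto simp: filter_id_conv)
    moreover have "filter (\<lambda>x. x \<noteq> n) B = B" using assms(2) by (auto simp: filter_id_conv)
    ultimately have "subseq ys (A @ B)" by simp
    then show ?thesis unfolding contains_id_def using ys by auto
  next
    case True
    have sub: "set ys \<subseteq> set (A @ n # B)" using ys(1) by (rule subseq_set)
    obtain y ys' where yy: "ys = y # ys'" using True by (cases ys) auto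
    have "y = n"
    proof (rule ccontr)
      assume "y \<noteq> n"
      then have "n \<in> set ys'" using True yy by auto
      then have "y < n" using ys(3) yy by auto
      moreover have "y \<in> set (A @ n # B)" using sub yy by auto
      ultimately show False using assms(1,2) \<open>y \<noteq> n\<close> by auto
    qed
    have "n \<notin> set A" using assms(1) by auto
    have h: "subseq (y#ys') (A @ n # B)" using ys(1) by (simp only: yy)
    have h2: "subseq (n#ys') (A @ n # B)" using h by (simp only: \<open>y = n\<close>)
    have "subseq (n#ys') (n # B)" by (rule subseq_skip[OF h2 \<open>n \<notin> set A\<close>])
    then have "subseq ys' B" by simp
    then have "length ys' \<le> length B" by (rule list_emb_length)
    then show ?thesis using ys(2) yy by auto
  qed
next
  assume "contains_id k (A @ B) \<or> k \<le> Suc (length B)"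
  then show "contains_id k (A @ n # B)"
  proof
    assume "contains_id k (A @ B)"
    then obtain ys where ys: "subseq ys (A @ B)" "length ys = k" "sorted_wrt (<) ys"
      unfolding contains_id_def by blast
    have "subseq B ([n] @ B)" by (rule list_emb_append2) (rule subseq_order.order_refl)
    then have "subseq (A @ B) (A @ n # B)" by (simp add: subseq_append')
    then have "subseq ys (A @ n # B)" using ys(1) subseq_order.trans by blast
    then show ?thesis unfolding contains_id_def using ys by blast
  next
    assume k: "k \<le> Suc (length B)"
    show ?thesis
    proof (cases k)
      case 0 then show ?thesis by simp
    next
      case (Suc j)
      have "subseq (take j B) B" by (rule prefix_imp_subseq) (rule take_is_prefix)
      then have "subseq (n # take j B) (n # B)" by simp
      then have f1: "subseq (n # take j B) (A @ n # B)" by (rule list_emb_append2)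
      have "\<forall>x\<in>set (take j B). n < x" using assms(2) by (auto dest: in_set_takeD)
      moreover have "sorted_wrt (<) (take j B)" using assms(3) by (rule sorted_wrt_take)
      ultimately have f2: "sorted_wrt (<) (n # take j B)" by simp
      have f3: "length (n # take j B) = k" using Suc k by simp
      show ?thesis unfolding contains_id_def
        apply (rule exI[where x="n # take j B"]) using f1 f2 f3 by simp
    qed
  qed
qed



lemma mk_Nil[simp]: "mk n [] = []" by (simp add: mk_def)
lemma mk_True: "mk n (True#w) = n # mk (Suc n) w" by (simp add: mk_def)
lemma mk_False: "mk n (False#w) = pa (Suc n) w @ n # pb (Suc n) w" by (simp add: mk_def)

lemma contains_mk: "contains_id k (mk n w) \<longleftrightarrow> k \<le> q w"
proof (induction w arbitrary: n k)
  case Nil then show ?case by (simp add: contains_Nil)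
next
  case (Cons b w)
  show ?case
  proof (cases b)
    case True
    show ?thesis
    proof (cases k)
      case 0 then show ?thesis by simp
    next
      case (Suc k')
      have "\<forall>x\<in>set (mk (Suc n) w). n < x" using mk_perm[of "Suc n" w] by auto
      then have "contains_id k (mk n (b#w)) \<longleftrightarrow> contains_id k' (mk (Suc n) w)"
        using True Suc by (simp add: mk_True contains_Cons)
      then show ?thesis using Cons.IH[where n="Suc n" and k=k'] True Suc by simp
    qed
  next
    case False
    have A: "\<forall>x\<in>set (pa (Suc n) w). n < x" by (auto simp: in_pa)
    have B: "\<forall>x\<in>set (pb (Suc n) w). n < x" by (auto simp: in_pb)
    have "contains_id k (mk n (b#w)) \<longleftrightarrow> contains_id k (mk (Suc n) w) \<or> k \<le> Suc (nF w)"
      using contains_mid[OF A B sorted_pb] False by (simp add: mk_False mk_def length_pb)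
    then show ?thesis using Cons.IH[where n="Suc n" and k=k] False by auto
  qed
qed

fun dsc :: "bool list \<Rightarrow> bool" where
  "dsc [] = True" | "dsc (b#w) = (if b then dsc w else (\<forall>x\<in>set w. \<not> x))"

lemma allF: "\<forall>x\<in>set w. \<not> x \<Longrightarrow> pa n w = [] \<and> pb n w = [n..<n+length w] \<and> nF w = length w"
proof (induction w arbitrary: n)
  case Nil then show ?case by simp
next
  case (Cons b w)
  then have nb: "\<not> b" and r: "\<forall>x\<in>set w. \<not> x" by auto
  have "[n..<n + length (b#w)] = n # [Suc n..<Suc n + length w]"
    by (simp del: upt_Suc add: upt_conv_Cons)
  then show ?case using Cons.IH[OF r, where n="Suc n"] nb by (simp del: upt_Suc)
qed

lemma dsc_mk: "dsc w \<Longrightarrow> mk n w = [n..<n+length w]"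
proof (induction w arbitrary: n)
  case Nil then show ?case by simp
next
  case (Cons b w)
  show ?case
  proof (cases b)
    case True then show ?thesis using Cons by (simp del: upt_Suc add: mk_True upt_conv_Cons)
  next
    case False
    then have "\<forall>x\<in>set w. \<not> x" using Cons.prems by simp
    then show ?thesis using False allF[of w "Suc n"] by (simp del: upt_Suc add: mk_False upt_conv_Cons)
  qed
qed

lemma dsc_q: "dsc w \<Longrightarrow> q w = length w"
proof (induction w)
  case (Cons b w)
  show ?case
  proof (cases b)
    case False
    then have "nF w = length w" using Cons.prems allF[of w 0] by simp
    then show ?thesis using False q_le_len[of w] by simp
  qed (use Cons in simp)
qed simp

lemma descents_upt: "descents [n..<m] = {}"
  by (auto simp: descents_def)

lemma not_dsc_desc: "\<not> dsc w \<Longrightarrow> descents (mk n w) \<noteq> {}"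
proof (induction w arbitrary: n)
  case Nil then show ?case by simp
next
  case (Cons b w)
  show ?case
  proof (cases b)
    case True
    then have "\<not> dsc w" using Cons.prems by simp
    then obtain d where d: "d \<in> descents (mk (Suc n) w)" using Cons.IH by blast
    then have "Suc d \<in> descents (n # mk (Suc n) w)" by (simp add: descents_def)
    then show ?thesis using True by (auto simp: mk_True)
  next
    case False
    then obtain i where i: "i < length w" "w!i" using Cons.prems by (auto simp: in_set_conv_nth)
    define A where "A = pa (Suc n) w"
    define B where "B = pb (Suc n) w"
    have "Suc n + i \<in> set A" using i by (simp add: A_def in_pa)
    then have Ane: "A \<noteq> []" by auto
    then have "A ! (length A - 1) \<in> set A" by simp
    then have gt: "A ! (length A - 1) > n" by (auto simp: A_def in_pa)
    have "length A - 1 \<in> descents (A @ n # B)"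
      using Ane gt by (cases A rule: rev_cases) (auto simp: descents_def nth_append)
    then show ?thesis using False by (auto simp: mk_False A_def B_def)
  qed
qed

lemma card_dsc: "card {w. length w = m \<and> dsc w} = Suc m"
proof (induction m)
  case 0
  have "{w. length w = 0 \<and> dsc w} = {[]}" by auto
  then show ?case by simp
next
  case (Suc m)
  have eq: "{w. length w = Suc m \<and> dsc w} = Cons True ` {w. length w = m \<and> dsc w} \<union> {replicate (Suc m) False}"
  proof (intro set_eqI iffI)
    fix w assume "w \<in> {w. length w = Suc m \<and> dsc w}"
    then obtain b w' where w: "w = b # w'" "length w' = m" "dsc (b#w')" by (cases w) auto
    show "w \<in> Cons True ` {w. length w = m \<and> dsc w} \<union> {replicate (Suc m) False}"
    proof (cases b)
      case True then show ?thesis using w by auto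
    next
      case False
      then have "w' = replicate m False" using w by (auto intro!: replicate_eqI)
      then show ?thesis using w False by simp
    qed
  next
    fix w assume "w \<in> Cons True ` {w. length w = m \<and> dsc w} \<union> {replicate (Suc m) False}"
    then show "w \<in> {w. length w = Suc m \<and> dsc w}" by auto
  qed
  have fin: "finite {w. length w = m \<and> dsc w}"
    by (rule finite_subset[OF _ finite_lists_length_eq[of "UNIV :: bool set" m]]) auto
  have "replicate (Suc m) False \<notin> Cons True ` {w. length w = m \<and> dsc w}" by auto
  then have "card {w. length w = Suc m \<and> dsc w} = card (Cons True ` {w. length w = m \<and> dsc w}) + 1"
    unfolding eq using fin by simp
  also have "\<dots> = Suc m + 1" using Suc by (simp add: card_image)
  finally show ?case by simp
qed



lemma recon:
  assumes d: "distinct (as @ bs)" and s: "set (as @ bs) = {n..<n+m}"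
    and sa: "sorted_wrt (<) as" and sb: "sorted_wrt (<) bs"
  shows "mk n (map (\<lambda>v. v \<in> set as) [n..<n+m]) = as @ bs"
proof -
  define w where "w = map (\<lambda>v. v \<in> set as) [n..<n+m]"
  have lw: "length w = m" by (simp add: w_def)
  have wi: "n \<le> v \<Longrightarrow> v < n + m \<Longrightarrow> w!(v-n) = (v \<in> set as)" for v
  proof -
    assume a: "n \<le> v" "v < n + m"
    have "[n..<n+m]!(v-n) = n + (v-n)" by (rule nth_upt) (use a in simp)
    then show ?thesis using a by (simp add: w_def)
  qed
  have "set (pa n w) = set as"
  proof
    show "set (pa n w) \<subseteq> set as" using wi lw by (auto simp: in_pa)
    show "set as \<subseteq> set (pa n w)"
    proof
      fix v assume v: "v \<in> set as"
      then have "n \<le> v" "v < n + m" using s by auto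
      then show "v \<in> set (pa n w)" using wi v lw by (simp add: in_pa)
    qed
  qed
  then have pa: "pa n w = as"
    using sorted_distinct_set_unique sorted_pa[of n w] sa strict_sorted_iff by metis
  have "set (pb n w) = set bs"
  proof
    show "set (pb n w) \<subseteq> set bs"
    proof
      fix v assume "v \<in> set (pb n w)"
      then have "n \<le> v" "v < n + m" "v \<notin> set as" using wi lw by (auto simp: in_pb)
      then show "v \<in> set bs" using s by auto
    qed
    show "set bs \<subseteq> set (pb n w)"
    proof
      fix v assume v: "v \<in> set bs"
      then have "n \<le> v" "v < n + m" "v \<notin> set as" using s d by auto
      then show "v \<in> set (pb n w)" using wi lw by (simp add: in_pb)
    qed
  qed
  then have pb: "pb n w = bs"
    using sorted_distinct_set_unique sorted_pb[of n w] sb strict_sorted_iff by metis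
  show ?thesis using pa pb by (simp add: mk_def w_def)
qed

lemma sorted_nodesc:
  assumes "distinct xs" "\<And>i. Suc i < length xs \<Longrightarrow> \<not> xs!i > xs!Suc i"
  shows "sorted_wrt (<) (xs :: nat list)"
proof -
  have "\<forall>i. Suc i < length xs \<longrightarrow> xs!i < xs!Suc i"
  proof (intro allI impI)
    fix i assume i: "Suc i < length xs"
    then have "xs!i \<noteq> xs!Suc i" using assms(1) by (simp add: nth_eq_iff_index_eq)
    then show "xs!i < xs!Suc i" using assms(2)[OF i] by simp
  qed
  then show ?thesis by (simp add: sorted_wrt_iff_nth_Suc_transp)
qed

lemma from_perm:
  assumes "xs \<in> perms_of m" "grassmannian xs"
  shows "\<exists>w. length w = m \<and> mk 1 w = xs"
proof -
  have dx: "distinct xs" and sx: "set xs = {1..m}" using assms(1) by (auto simp: perms_of_def)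
  have fin: "finite (descents xs)"
    by (rule finite_subset[of _ "{..<length xs}"]) (auto simp: descents_def)
  have c1: "card (descents xs) \<le> Suc 0" using assms(2) by (simp add: grassmannian_def)
  obtain p where p: "p \<le> length xs" "\<And>d. d \<in> descents xs \<Longrightarrow> Suc d = p"
  proof (cases "descents xs = {}")
    case True then show ?thesis using that[of "length xs"] by auto
  next
    case False
    then obtain d where d: "d \<in> descents xs" by blast
    then have "\<forall>e\<in>descents xs. e = d" using c1 fin by (auto simp: card_le_Suc0_iff_eq)
    moreover have "Suc d \<le> length xs" using d by (simp add: descents_def)
    ultimately show ?thesis using that[of "Suc d"] by auto
  qed
  define as where "as = take p xs"
  define bs where "bs = drop p xs"
  have xs: "xs = as @ bs" by (simp add: as_def bs_def)
  have sa: "sorted_wrt (<) as"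
  proof (rule sorted_nodesc)
    show "distinct as" using dx by (simp add: as_def)
    fix i assume i: "Suc i < length as"
    then have "i \<notin> descents xs" using p(2)[of i] by (auto simp: as_def)
    then show "\<not> as!i > as!Suc i" using i by (auto simp: descents_def as_def)
  qed
  have sb: "sorted_wrt (<) bs"
  proof (rule sorted_nodesc)
    show "distinct bs" using dx by (simp add: bs_def)
    fix i assume i: "Suc i < length bs"
    then have "p + i \<notin> descents xs" using p(2)[of "p+i"] by auto
    then show "\<not> bs!i > bs!Suc i" using i p(1) by (auto simp: descents_def bs_def)
  qed
  have s2: "set (as @ bs) = {1..<1+m}" using sx xs by auto
  have "mk 1 (map (\<lambda>v. v \<in> set as) [1..<1+m]) = xs"
    using recon[OF _ s2 sa sb] dx xs by simp
  then show ?thesis by (intro exI[of _ "map (\<lambda>v. v \<in> set as) [1..<1+m]"]) simp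
qed

lemma mk_inj:
  assumes "mk n w = mk n w'" "length w = length w'" "descents (mk n w) \<noteq> {}"
  shows "w = w'"
proof -
  obtain d where d: "d \<in> descents (mk n w)" using assms(3) by blast
  have l1: "Suc d = length (pa n w)" using desc_app[OF sorted_pa sorted_pb] d by (simp add: mk_def)
  have l2: "Suc d = length (pa n w')" using desc_app[OF sorted_pa sorted_pb] d assms(1) by (simp add: mk_def)
  have "pa n w = take (Suc d) (mk n w)" using l1 by (simp add: mk_def)
  also have "\<dots> = take (Suc d) (mk n w')" using assms(1) by simp
  also have "\<dots> = pa n w'" using l2 by (simp add: mk_def)
  finally have pa: "pa n w = pa n w'" .
  show ?thesis
  proof (rule nth_equalityI)
    show "length w = length w'" by fact
    fix i assume "i < length w"
    then show "w!i = w'!i" using pa assms(2) in_pa[of "n+i" n w] in_pa[of "n+i" n w'] by simp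
  qed
qed

lemma mk_perm1: "mk 1 w \<in> perms_of (length w)"
  using mk_perm[of 1 w] by (auto simp: perms_of_def)

lemma G_char: "G m k = mk 1 ` {w. length w = m \<and> q w < k}"
proof
  show "G m k \<subseteq> mk 1 ` {w. length w = m \<and> q w < k}"
  proof
    fix xs assume "xs \<in> G m k"
    then have x: "xs \<in> perms_of m" "grassmannian xs" "\<not> contains_id k xs" by (auto simp: G_def)
    obtain w where w: "length w = m" "mk 1 w = xs" using from_perm[OF x(1,2)] by blast
    then have "q w < k" using x(3) contains_mk[of k 1 w] by simp
    then show "xs \<in> mk 1 ` {w. length w = m \<and> q w < k}" using w by blast
  qed
  show "mk 1 ` {w. length w = m \<and> q w < k} \<subseteq> G m k"
  proof
    fix xs assume "xs \<in> mk 1 ` {w. length w = m \<and> q w < k}"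
    then obtain w where w: "length w = m" "q w < k" "xs = mk 1 w" by blast
    have "grassmannian xs" using w(3) grass_app[OF sorted_pa sorted_pb] by (simp add: mk_def)
    moreover have "xs \<in> perms_of m" using w mk_perm1[of w] by simp
    moreover have "\<not> contains_id k xs" using w contains_mk[of k 1 w] by simp
    ultimately show "xs \<in> G m k" by (simp add: G_def)
  qed
qed

lemma card_G: "card (G m k) + (if m < k then m else 0) = card {w. length w = m \<and> q w < k}"
proof -
  define W where "W = {w. length w = m \<and> q w < k}"
  define D where "D = {w \<in> W. \<not> dsc w}"
  define E where "E = {w \<in> W. dsc w}"
  have finW: "finite W"
    by (rule finite_subset[OF _ finite_lists_length_eq[of "UNIV :: bool set" m]]) (auto simp: W_def)
  have WDE: "W = D \<union> E" "D \<inter> E = {}" by (auto simp: D_def E_def)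
  have finD: "finite D" "finite E" using finW WDE by auto
  have injD: "inj_on (mk 1) D"
  proof (rule inj_onI)
    fix w w' assume "w \<in> D" "w' \<in> D" "mk 1 w = mk 1 w'"
    then show "w = w'" using mk_inj[of 1 w w'] not_dsc_desc[of w 1] by (auto simp: D_def W_def)
  qed
  have GDE: "G m k = mk 1 ` D \<union> mk 1 ` E" unfolding G_char W_def[symmetric] WDE(1) by auto
  have Eimg: "mk 1 ` E \<subseteq> {[1..<1+m]}" using dsc_mk by (auto simp: E_def W_def)
  have disj: "mk 1 ` D \<inter> mk 1 ` E = {}"
  proof -
    have "descents x \<noteq> {}" if "x \<in> mk 1 ` D" for x using that not_dsc_desc by (auto simp: D_def)
    moreover have "descents x = {}" if "x \<in> mk 1 ` E" for x
    proof -
      have "x = [1..<1+m]" using that Eimg by blast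
      then show ?thesis by (simp only: descents_upt)
    qed
    ultimately show ?thesis by blast
  qed
  have cardG: "card (G m k) = card D + card (mk 1 ` E)"
    unfolding GDE using card_Un_disjoint[OF _ _ disj] finD card_image[OF injD] by simp
  have "card (mk 1 ` E) + (if m < k then m else 0) = card E"
  proof (cases "m < k")
    case True
    then have E: "E = {w. length w = m \<and> dsc w}" using dsc_q by (auto simp: E_def W_def)
    have "dsc (replicate j True)" for j by (induction j) auto
    then have "replicate m True \<in> E" using E by simp
    then have "mk 1 ` E \<noteq> {}" by blast
    then have "mk 1 ` E = {[1..<1+m]}" using subset_singletonD[OF Eimg] by blast
    then have "card (mk 1 ` E) = 1" by (simp only: is_singleton_altdef[symmetric] is_singletonI)
    then show ?thesis using True E card_dsc[of m] by simp
  next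
    case False
    then have "E = {}" using dsc_q by (auto simp: E_def W_def)
    then show ?thesis using False by simp
  qed
  then show ?thesis using cardG WDE finD card_Un_disjoint[of D E] by (simp add: W_def)
qed



definition Sset :: "nat \<Rightarrow> nat \<Rightarrow> bool list set" where
  "Sset c d = {w. q w \<le> c \<and> nF w \<le> d}"

lemma finite_Sset: "finite (Sset c d)"
proof (rule finite_subset[OF _ finite_lists_length_le[of "UNIV :: bool set" "2*c"]])
  show "Sset c d \<subseteq> {xs. set xs \<subseteq> UNIV \<and> length xs \<le> 2 * c}"
  proof
    fix x assume "x \<in> Sset c d"
    then have "q x \<le> c" by (simp add: Sset_def)
    then have "length x \<le> 2 * c" using len_le_q[of x] by linarith
    then show "x \<in> {xs. set xs \<subseteq> UNIV \<and> length xs \<le> 2 * c}" by simp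
  qed
qed simp

lemma Sset_rec:
  assumes "d \<le> c"
  shows "Sset c d = {[]} \<union> Cons True ` (if c = 0 then {} else Sset (c-1) (min d (c-1)))
                        \<union> Cons False ` (if d = 0 then {} else Sset c (d-1))"
proof (intro set_eqI iffI)
  fix w assume w: "w \<in> Sset c d"
  show "w \<in> {[]} \<union> Cons True ` (if c = 0 then {} else Sset (c-1) (min d (c-1)))
                        \<union> Cons False ` (if d = 0 then {} else Sset c (d-1))"
  proof (cases w)
    case Nil then show ?thesis by simp
  next
    case (Cons b u)
    show ?thesis
    proof (cases b)
      case True
      then have "Suc (q u) \<le> c" "nF u \<le> d" using w Cons by (auto simp: Sset_def)
      moreover have "nF u \<le> q u" by (rule nF_le_q)
      ultimately have "c \<noteq> 0" "u \<in> Sset (c-1) (min d (c-1))" by (auto simp: Sset_def)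
      then show ?thesis using Cons True by auto
    next
      case False
      then have "q u \<le> c" "Suc (nF u) \<le> d" using w Cons by (auto simp: Sset_def)
      then have "d \<noteq> 0" "u \<in> Sset c (d-1)" by (auto simp: Sset_def)
      then show ?thesis using Cons False by auto
    qed
  qed
next
  fix w assume "w \<in> {[]} \<union> Cons True ` (if c = 0 then {} else Sset (c-1) (min d (c-1)))
                        \<union> Cons False ` (if d = 0 then {} else Sset c (d-1))"
  then show "w \<in> Sset c d"
  proof (elim UnE)
    assume "w \<in> {[]}" then show ?thesis by (simp add: Sset_def)
  next
    assume "w \<in> Cons True ` (if c = 0 then {} else Sset (c-1) (min d (c-1)))"
    then obtain u where "w = True # u" "c \<noteq> 0" "q u \<le> c - 1" "nF u \<le> d"
      by (auto simp: Sset_def split: if_splits)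
    then show ?thesis by (auto simp: Sset_def)
  next
    assume "w \<in> Cons False ` (if d = 0 then {} else Sset c (d-1))"
    then obtain u where "w = False # u" "d \<noteq> 0" "q u \<le> c" "nF u \<le> d - 1"
      by (auto simp: Sset_def split: if_splits)
    then show ?thesis using assms by (auto simp: Sset_def)
  qed
qed

lemma card_Sset_rec:
  assumes "d \<le> c"
  shows "card (Sset c d) = 1 + (if c = 0 then 0 else card (Sset (c-1) (min d (c-1))))
                             + (if d = 0 then 0 else card (Sset c (d-1)))"
proof -
  define X where "X = (if c = 0 then {} else Sset (c-1) (min d (c-1)))"
  define Y where "Y = (if d = 0 then {} else Sset c (d-1))"
  have fX: "finite X" and fY: "finite Y" by (auto simp: X_def Y_def finite_Sset)
  have cX: "card (Cons True ` X) = card X" by (simp add: card_image)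
  have cY: "card (Cons False ` Y) = card Y" by (simp add: card_image)
  have "card (Sset c d) = card ({[]} \<union> Cons True ` X \<union> Cons False ` Y)"
    using Sset_rec[OF assms] by (simp add: X_def Y_def)
  also have "\<dots> = card ({[]} \<union> Cons True ` X) + card (Cons False ` Y)"
    by (rule card_Un_disjoint) (use fX fY in auto)
  also have "card ({[]} \<union> Cons True ` X) = 1 + card (Cons True ` X)"
    using fX by (subst card_Un_disjoint) auto
  finally show ?thesis using cX cY by (simp add: X_def Y_def)
qed

definition Bf :: "nat \<Rightarrow> nat \<Rightarrow> int" where
  "Bf c d = int ((c+d+3) choose (Suc d)) - int ((c+d+3) choose d)"

lemma Bf_pascal: "Bf (Suc c) (Suc d) = Bf c (Suc d) + Bf (Suc c) d"
proof -
  define N where "N = c + d + 4"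
  have e1: "Suc c + Suc d + 3 = Suc N" "c + Suc d + 3 = N" "Suc c + d + 3 = N" by (simp_all add: N_def)
  have p1: "Suc N choose Suc (Suc d) = (N choose Suc d) + (N choose Suc (Suc d))" by simp
  have p2: "Suc N choose Suc d = (N choose d) + (N choose Suc d)" by simp
  show ?thesis unfolding Bf_def e1 p1 p2 by simp
qed

lemma Bf_sym: "Bf c c = Bf c (Suc c)"
proof -
  define N where "N = 2*c + 3"
  have e1: "c + c + 3 = N" "c + Suc c + 3 = Suc N" by (simp_all add: N_def)
  have p1: "Suc N choose Suc (Suc c) = (N choose Suc c) + (N choose Suc (Suc c))" by simp
  have p2: "Suc N choose Suc c = (N choose c) + (N choose Suc c)" by simp
  have s: "N choose Suc (Suc c) = N choose Suc c"
    using binomial_symmetric[of "Suc c" N] by (simp add: N_def)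
  show ?thesis unfolding Bf_def e1 p1 p2 s by simp
qed

lemma count_Sset: "d \<le> c \<Longrightarrow> int (card (Sset c d)) + 1 = Bf c d"
proof (induction c arbitrary: d)
  case 0
  then have "d = 0" by simp
  then show ?case using card_Sset_rec[of 0 0] by (simp add: Bf_def)
next
  case (Suc c)
  note IHc = Suc.IH
  show ?case using Suc.prems
  proof (induction d)
    case 0
    have "card (Sset (Suc c) 0) = 1 + card (Sset c 0)" using card_Sset_rec[of 0 "Suc c"] by simp
    moreover have "int (card (Sset c 0)) + 1 = Bf c 0" using IHc[of 0] by simp
    ultimately show ?case by (simp add: Bf_def)
  next
    case (Suc d')
    have r: "card (Sset (Suc c) (Suc d')) = 1 + card (Sset c (min (Suc d') c)) + card (Sset (Suc c) d')"
      using card_Sset_rec[OF Suc.prems] by simp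
    have h1: "int (card (Sset c (min (Suc d') c))) + 1 = Bf c (Suc d')"
    proof (cases "Suc d' \<le> c")
      case True then show ?thesis using IHc[of "Suc d'"] by simp
    next
      case False
      then have "d' = c" using Suc.prems by simp
      then show ?thesis using IHc[of c] Bf_sym[of c] by simp
    qed
    have h2: "int (card (Sset (Suc c) d')) + 1 = Bf (Suc c) d'" using Suc.IH Suc.prems by simp
    show ?case using r h1 h2 Bf_pascal[of c d'] by simp
  qed
qed

lemma catalan_Bf: "int (catalan (Suc (Suc j))) = Bf j j"
proof -
  define a where "a = (2*j+3) choose (Suc j)"
  define b where "b = (2*j+3) choose j"
  have i1: "Suc j * a = (2*j+3) * ((2*j+2) choose j)"
  proof -
    have eq: "Suc (2*j+2) = 2*j+3" by simp
    have "Suc j * (Suc (2*j+2) choose Suc j) = Suc (2*j+2) * ((2*j+2) choose j)"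
      by (rule Suc_times_binomial)
    then show ?thesis by (simp only: a_def eq)
  qed
  have i2: "(j+3) * b = (2*j+3) * ((2*j+2) choose j)"
  proof -
    have eq: "2*j+3 - j = j+3" "2*j+3 - 1 = 2*j+2" by simp_all
    have "(2*j+3 - j) * ((2*j+3) choose j) = (2*j+3) * ((2*j+3 - 1) choose j)"
      by (rule binomial_absorb_comp)
    then show ?thesis by (simp only: b_def eq)
  qed
  have ab: "Suc j * a = (j+3) * b" using i1 i2 by simp
  have ba: "b \<le> a"
  proof (rule ccontr)
    assume "\<not> b \<le> a"
    then have "Suc j * a < Suc j * b" by (intro mult_strict_left_mono) simp_all
    also have "\<dots> \<le> (j+3) * b" by (intro mult_right_mono) simp_all
    finally show False using ab by simp
  qed
  have c2: "(2*j+4) choose (j+2) = 2 * a"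
  proof -
    have "(2*j+4) choose (j+2) = Suc (2*j+3) choose Suc (Suc j)"
      by (rule arg_cong2[where f=binomial]) simp_all
    also have "\<dots> = ((2*j+3) choose (Suc j)) + ((2*j+3) choose Suc (Suc j))"
      by (rule binomial_Suc_Suc)
    also have "(2*j+3) choose Suc (Suc j) = (2*j+3) choose Suc j"
      using binomial_symmetric[of "Suc j" "2*j+3"] by simp
    finally show ?thesis by (simp add: a_def)
  qed
  have "(j+3)*(a-b) = (j+3)*a - (j+3)*b" by (simp add: diff_mult_distrib2)
  also have "\<dots> = (j+3)*a - Suc j * a" using ab by simp
  also have "\<dots> = ((j+3) - Suc j) * a" by (simp only: diff_mult_distrib)
  also have "\<dots> = 2 * a" by simp
  finally have m: "(j+3)*(a-b) = 2*a" .
  have "catalan (Suc (Suc j)) = ((2 * Suc (Suc j)) choose (Suc (Suc j))) div (Suc (Suc j) + 1)"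
    by (simp only: catalan_def)
  also have "\<dots> = ((2*j+4) choose (j+2)) div (j+3)"
    by (intro arg_cong2[where f="(div)"] arg_cong2[where f=binomial]) simp_all
  also have "\<dots> = ((j+3)*(a-b)) div (j+3)" using c2 m by simp
  also have "\<dots> = a - b" by simp
  finally have "catalan (Suc (Suc j)) = a - b" .
  then have "int (catalan (Suc (Suc j))) = int a - int b" using ba by (simp add: of_nat_diff)
  moreover have "Bf j j = int a - int b"
  proof -
    have e: "j + j + 3 = 2*j+3" by simp
    show ?thesis unfolding Bf_def a_def b_def e ..
  qed
  ultimately show ?thesis by simp
qed

lemma sum_lt_choose2: "(\<Sum>m<k. m) = k choose 2"
proof (induction k)
  case (Suc k)
  have "(Suc k) choose 2 = (k choose 1) + (k choose 2)"
    using binomial_Suc_Suc[of k 1] by (simp add: numeral_2_eq_2)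
  then show ?case using Suc by simp
qed simp

theorem corollary3p8:
  fixes k :: nat
  assumes "k \<ge> 1"
  shows "int (\<Sum>m = 0..2 * k - 2. card (G m k))
           = int (catalan (k + 1)) - int (k choose 2) - 1
         \<and> (\<forall>m \<ge> 2 * k - 1. G m k = {})"
proof
  define W where "W m = {w. length w = m \<and> q w < k}" for m
  have Wsmall: "W m = {}" if "m \<ge> 2 * k - 1" for m
  proof -
    have "False" if w: "length w = m" "q w < k" for w
      using len_le_q[of w] w \<open>m \<ge> 2 * k - 1\<close> assms by linarith
    then show ?thesis by (auto simp: W_def)
  qed
  show "\<forall>m \<ge> 2 * k - 1. G m k = {}"
    using Wsmall by (simp add: G_char W_def[symmetric])
  obtain j where j: "k = Suc j" using assms by (cases k) auto
  have finW: "finite (W m)" for m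
    by (rule finite_subset[OF _ finite_lists_length_eq[of "UNIV :: bool set" m]]) (auto simp: W_def)
  have U: "Sset j j = (\<Union>m\<in>{0..2*k-2}. W m)"
  proof (intro set_eqI iffI)
    fix w assume "w \<in> Sset j j"
    then have "q w \<le> j" by (simp add: Sset_def)
    moreover have "length w \<le> 2 * q w" by (rule len_le_q)
    ultimately show "w \<in> (\<Union>m\<in>{0..2*k-2}. W m)" using j by (auto simp: W_def)
  next
    fix w assume "w \<in> (\<Union>m\<in>{0..2*k-2}. W m)"
    then have "q w \<le> j" using j by (auto simp: W_def)
    moreover have "nF w \<le> q w" by (rule nF_le_q)
    ultimately show "w \<in> Sset j j" by (simp add: Sset_def)
  qed
  have cS: "card (Sset j j) = (\<Sum>m\<in>{0..2*k-2}. card (W m))"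
    unfolding U by (rule card_UN_disjoint) (use finW in \<open>auto simp: W_def\<close>)
  have cG: "int (card (G m k)) = int (card (W m)) - int (if m < k then m else 0)" for m
    using card_G[of m k] by (simp add: W_def)
  have fil: "{m \<in> {0..2*k-2}. m < k} = {..<k}" using j by auto
  have s2: "(\<Sum>m\<in>{0..2*k-2}. (if m < k then m else 0)) = k choose 2"
    using sum.inter_filter[of "{0..2*k-2}" "\<lambda>m. m" "\<lambda>m. m < k"] fil sum_lt_choose2[of k] by simp
  have "int (\<Sum>m = 0..2 * k - 2. card (G m k)) = (\<Sum>m = 0..2 * k - 2. int (card (G m k)))"
    by simp
  also have "\<dots> = (\<Sum>m = 0..2 * k - 2. int (card (W m))) - (\<Sum>m = 0..2 * k - 2. int (if m < k then m else 0))"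
    unfolding cG by (rule sum_subtractf)
  also have "\<dots> = int (card (Sset j j)) - int (k choose 2)"
    unfolding cS s2[symmetric] by simp
  also have "int (card (Sset j j)) = Bf j j - 1" using count_Sset[of j j] by simp
  also have "Bf j j = int (catalan (k + 1))" using catalan_Bf[of j] j by simp
  finally show "int (\<Sum>m = 0..2 * k - 2. card (G m k)) = int (catalan (k + 1)) - int (k choose 2) - 1"
    by simp
qed


end
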